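(* Let $(D,\Gamma)$ be a consistent action theory, $n\ge0$, and let $s_0a_0s_1\dots a_{n-1}s_n$ be a trajectory in $D$ with $s_0=s_0^\Gamma$. Then the program $\pi$ has an answer set $X$ such that $s_t(X)=s_t$ for every $t\in\{0,\dots,n\}$ and $occ(a_t,t)\in X$ for every $t\in\{0,\dots,n-1\}$.
   Context: Action language $\mathcal{B}$: fix finite sets $\mathbf{F}$ of fluents and $\mathbf{A}$ of actions. A fluent literal is $f$ or $\neg f$ ($f\in\mathbf{F}$); the complement $\bar l$ of $f$ is $\neg f$ and of $\neg f$ is $f$. A set of fluent literals is consistent if it contains no pair $f,\neg f$; an interpretation is a maximal consistent set. For a set $u$ of literals, $u\models p_1\wedge\dots\wedge p_k$ means $\{p_1,\dots,p_k\}\subseteq u$. A domain description $D$ is a finite set of static causal laws $\mathbf{caused}(\{p_1,\dots,p_k\},f)$ (their set is $D_C$), dynamic causal laws $\mathbf{causes}(a,f,\{p_1,\dots,p_k\})$ and executability conditions $\mathbf{executable}(a,\{p_1,\dots,p_k\})$, with $a\in\mathbf{A}$ and $f,p_i$ fluent literals; $\Gamma$ is a set of propositions $\mathbf{initially}(f)$. A consistent set $u$ is closed under $D_C$ if for every $\mathbf{caused}(P,f)\in D_C$ with $P\subseteq u$, $f\in u$; $Cl_{D_C}(u)$ is the least consistent superset of $u$ closed under $D_C$ (undefined if none). A state is an interpretation closed under $D_C$. Action $a$ is executable in state $s$ if some $\mathbf{executable}(a,P)\in D$ has $P\subseteq s$. $E(a,s)=\{f\mid \mathbf{causes}(a,f,P)\in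 D,\ P\subseteq s\}$. $\Phi(a,s)=\{s'\mid s'\text{ a state},\ s'=Cl_{D_C}(E(a,s)\cup(s\cap s'))\}$ if $a$ is executable in $s$, and $\Phi(a,s)=\emptyset$ otherwise. A trajectory is a sequence $s_0a_0s_1\dots a_{m-1}s_m$ of states $s_i$ and actions $a_i$ with $s_{i+1}\in\Phi(a_i,s_i)$. $D$ is consistent if $\Phi(a,s)\ne\emptyset$ whenever $a$ is executable in state $s$; $(D,\Gamma)$ is consistent if $D$ is consistent and $s_0^\Gamma:=\{f\mid\mathbf{initially}(f)\in\Gamma\}$ is a state of $D$. Answer sets: a ground normal program consists of rules $h\leftarrow b_1,\dots,b_m,\mathit{not}\,c_1,\dots,\mathit{not}\,c_r$ and constraints $\bot\leftarrow b_1,\dots,b_m,\mathit{not}\,c_1,\dots,\mathit{not}\,c_r$. For a set $S$ of atoms, the reduct $\Pi^S$ deletes every rule/constraint containing $\mathit{not}\,c$ with $c\in S$ and deletes all $\mathit{not}$-literals from the rest; $S$ is an answer set of $\Pi$ if $S$ is the least set of atoms closed under the non-constraint rules of $\Pi^S$ and no constraint of $\Pi^S$ has its whole body contained in $S$. The program $\pi$ (ground; $t$ ranges over $\{0,\dots,n\}$ unless stated): (1) $holds(l,0)\leftarrow$ for each $\mathbf{initially}(l)\in\Gamma$; (2) $possible(a,t)\leftarrow holds(p_1,t),\dots,holds(p_k,t)$ for each $\mathbf{executable}(a,\{p_1,\dots,p_k\})\in D$; (3) for $t\in\{0,\dots,n-1\}$, $holds(f,t+1)\leftarrow occ(a,t),possible(a,t),holds(p_1,t),\dots,holds(p_k,t)$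 for each $\mathbf{causes}(a,f,\{p_1,\dots,p_k\})\in D$; (4) $holds(f,t)\leftarrow holds(p_1,t),\dots,holds(p_k,t)$ for each $\mathbf{caused}(\{p_1,\dots,p_k\},f)\in D$; (5) $occ(a,t)\leftarrow possible(a,t),\mathit{not}\,nocc(a,t)$ for each action $a$; (6) $nocc(a,t)\leftarrow occ(b,t)$ for each pair of distinct actions $a\ne b$; (7) for $t\in\{0,\dots,n-1\}$, $holds(l,t+1)\leftarrow holds(l,t),\mathit{not}\,holds(\bar l,t+1)$ for each fluent literal $l$; (8) $\bot\leftarrow holds(f,t),holds(\neg f,t)$ for each fluent $f$. For a set $M$ of atoms, $s_i(M)=\{l\mid l\text{ a fluent literal},\ holds(l,i)\in M\}$. *)

theory Defs
  imports Main
begin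

datatype 'f lit = Pos 'f | Neg 'f

fun compl :: "'f lit \<Rightarrow> 'f lit" where
  "compl (Pos f) = Neg f"
| "compl (Neg f) = Pos f"

datatype ('f, 'a) law =
    Caused "'f lit set" "'f lit"
  | Causes 'a "'f lit" "'f lit set"
  | Executable 'a "'f lit set"

definition consistent_lits :: "'f lit set \<Rightarrow> bool" where
  "consistent_lits u \<longleftrightarrow> (\<forall>f. \<not> (Pos f \<in> u \<and> Neg f \<in> u))"

definition is_interpretation :: "'f lit set \<Rightarrow> bool" where
  "is_interpretation u \<longleftrightarrow> consistent_lits u \<and>
     (\<forall>v. consistent_lits v \<and> u \<subseteq> v \<longrightarrow> v = u)"

definition closed_DC :: "('f, 'a) law set \<Rightarrow> 'f lit set \<Rightarrow> bool" where
  "closed_DC D u \<longleftrightarrow> consistent_lits u \<and>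
     (\<forall>P f. Caused P f \<in> D \<and> P \<subseteq> u \<longrightarrow> f \<in> u)"

definition is_least_closed :: "('f, 'a) law set \<Rightarrow> 'f lit set \<Rightarrow> 'f lit set \<Rightarrow> bool" where
  "is_least_closed D u v \<longleftrightarrow> u \<subseteq> v \<and> closed_DC D v \<and>
     (\<forall>w. u \<subseteq> w \<and> closed_DC D w \<longrightarrow> v \<subseteq> w)"

definition Cl :: "('f, 'a) law set \<Rightarrow> 'f lit set \<Rightarrow> 'f lit set option" where
  "Cl D u = (if \<exists>v. is_least_closed D u v then Some (THE v. is_least_closed D u v) else None)"

definition state :: "('f, 'a) law set \<Rightarrow> 'f lit set \<Rightarrow> bool" where
  "state D s \<longleftrightarrow> is_interpretation s \<and> closed_DC D s"

definition executable_in :: "('f, 'a) law set \<Rightarrow> 'a \<Rightarrow> 'f lit set \<Rightarrow> bool" where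
  "executable_in D a s \<longleftrightarrow> (\<exists>P. Executable a P \<in> D \<and> P \<subseteq> s)"

definition Eff :: "('f, 'a) law set \<Rightarrow> 'a \<Rightarrow> 'f lit set \<Rightarrow> 'f lit set" where
  "Eff D a s = {f. \<exists>P. Causes a f P \<in> D \<and> P \<subseteq> s}"

definition Phi :: "('f, 'a) law set \<Rightarrow> 'a \<Rightarrow> 'f lit set \<Rightarrow> 'f lit set set" where
  "Phi D a s = (if executable_in D a s
     then {s'. state D s' \<and> Cl D (Eff D a s \<union> (s \<inter> s')) = Some s'}
     else {})"

text \<open>Trajectory s_0 a_0 s_1 ... a_{n-1} s_n, given by s :: nat => states and a :: nat => actions.\<close>
definition trajectory :: "('f, 'a) law set \<Rightarrow> nat \<Rightarrow> (nat \<Rightarrow> 'f lit set) \<Rightarrow> (nat \<Rightarrow> 'a) \<Rightarrow> bool" where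
  "trajectory D n s a \<longleftrightarrow> (\<forall>i\<le>n. state D (s i)) \<and> (\<forall>i<n. s (Suc i) \<in> Phi D (a i) (s i))"

definition consistent_D :: "('f, 'a) law set \<Rightarrow> bool" where
  "consistent_D D \<longleftrightarrow> (\<forall>a s. state D s \<and> executable_in D a s \<longrightarrow> Phi D a s \<noteq> {})"

text \<open>Gamma is represented by the set of literals l with initially(l) in Gamma, i.e. s_0^Gamma.\<close>
definition consistent_theory :: "('f, 'a) law set \<Rightarrow> 'f lit set \<Rightarrow> bool" where
  "consistent_theory D Gamma \<longleftrightarrow> consistent_D D \<and> state D Gamma"

datatype ('f, 'a) atom = Holds "'f lit" nat | Possible 'a nat | Occ 'a nat | Nocc 'a nat

text \<open>Rule head body_pos body_neg; head None = constraint (bottom).\<close>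
datatype 'x rule = Rule "'x option" "'x set" "'x set"

definition reduct :: "'x rule set \<Rightarrow> 'x set \<Rightarrow> ('x option \<times> 'x set) set" where
  "reduct P S = {(h, B) | h B C. Rule h B C \<in> P \<and> C \<inter> S = {}}"

definition closed_rules :: "('x option \<times> 'x set) set \<Rightarrow> 'x set \<Rightarrow> bool" where
  "closed_rules R M \<longleftrightarrow> (\<forall>h B. (Some h, B) \<in> R \<and> B \<subseteq> M \<longrightarrow> h \<in> M)"

definition answer_set :: "'x rule set \<Rightarrow> 'x set \<Rightarrow> bool" where
  "answer_set P S \<longleftrightarrow>
     (closed_rules (reduct P S) S \<and> (\<forall>M. closed_rules (reduct P S) M \<longrightarrow> S \<subseteq> M)) \<and>
     (\<forall>B. (None, B) \<in> reduct P S \<longrightarrow> \<not> B \<subseteq> S)"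

definition program :: "('f, 'a) law set \<Rightarrow> 'f lit set \<Rightarrow> nat \<Rightarrow> ('f, 'a) atom rule set" where
  "program D Gamma n =
     {Rule (Some (Holds l 0)) {} {} | l. l \<in> Gamma}
   \<union> {Rule (Some (Possible a t)) ((\<lambda>p. Holds p t) ` P) {} | a P t. Executable a P \<in> D \<and> t \<le> n}
   \<union> {Rule (Some (Holds f (Suc t))) ({Occ a t, Possible a t} \<union> (\<lambda>p. Holds p t) ` P) {}
        | a f P t. Causes a f P \<in> D \<and> t < n}
   \<union> {Rule (Some (Holds f t)) ((\<lambda>p. Holds p t) ` P) {} | f P t. Caused P f \<in> D \<and> t \<le> n}
   \<union> {Rule (Some (Occ a t)) {Possible a t} {Nocc a t} | a t. t \<le> n}
   \<union> {Rule (Some (Nocc a t)) {Occ b t} {} | a b t. a \<noteq> b \<and> t \<le> n}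
   \<union> {Rule (Some (Holds l (Suc t))) {Holds l t} {Holds (compl l) (Suc t)} | l t. t < n}
   \<union> {Rule None {Holds (Pos f) t, Holds (Neg f) t} {} | f t. t \<le> n}"

definition s_at :: "('f, 'a) atom set \<Rightarrow> nat \<Rightarrow> 'f lit set" where
  "s_at M i = {l. Holds l i \<in> M}"

end

theory Submission
  imports Defs
begin

lemma interp_compl:
  assumes "is_interpretation s" "compl l \<notin> s"
  shows "l \<in> s"
proof (rule ccontr)
  assume nl: "l \<notin> s"
  have "consistent_lits (insert l s)"
    using assms nl unfolding is_interpretation_def consistent_lits_def
    by (cases l) auto
  then have "insert l s = s" using assms(1) unfolding is_interpretation_def by blast
  with nl show False by blast
qed

lemma interp_cons:
  assumes "is_interpretation s" "l \<in> s"
  shows "compl l \<notin> s"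
  using assms unfolding is_interpretation_def consistent_lits_def
  by (cases l) auto

lemma Cl_least:
  assumes "Cl D u = Some v"
  shows "is_least_closed D u v"
proof -
  have ex: "\<exists>v. is_least_closed D u v" using assms unfolding Cl_def by (auto split: if_splits)
  have v: "v = (THE v. is_least_closed D u v)" using assms ex unfolding Cl_def by auto
  have uniq: "\<And>x y. is_least_closed D u x \<Longrightarrow> is_least_closed D u y \<Longrightarrow> x = y"
    unfolding is_least_closed_def by blast
  show ?thesis unfolding v using ex uniq by (metis theI)
qed

lemma red_mem:
  "Rule h B C \<in> P \<Longrightarrow> C \<inter> S = {} \<Longrightarrow> (h, B) \<in> reduct P S"
  unfolding reduct_def by blast

lemma cl_use:
  "closed_rules R M \<Longrightarrow> (Some h, B) \<in> R \<Longrightarrow> B \<subseteq> M \<Longrightarrow> h \<in> M"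
  unfolding closed_rules_def by blast

lemma prog_inv:
  assumes "Rule (Some h) B C \<in> program D Gamma n"
  shows "(\<exists>l. h = Holds l 0 \<and> B = {} \<and> C = {} \<and> l \<in> Gamma) \<or>
     (\<exists>a P t. h = Possible a t \<and> B = (\<lambda>p. Holds p t) ` P \<and> C = {} \<and> Executable a P \<in> D \<and> t \<le> n) \<or>
     (\<exists>a f P t. h = Holds f (Suc t) \<and>
         B = insert (Occ a t) (insert (Possible a t) ((\<lambda>p. Holds p t) ` P)) \<and>
         C = {} \<and> Causes a f P \<in> D \<and> t < n) \<or>
     (\<exists>f P t. h = Holds f t \<and> B = (\<lambda>p. Holds p t) ` P \<and> C = {} \<and> Caused P f \<in> D \<and> t \<le> n) \<or>
     (\<exists>a t. h = Occ a t \<and> B = {Possible a t} \<and> C = {Nocc a t} \<and> t \<le> n) \<or>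
     (\<exists>a b t. h = Nocc a t \<and> B = {Occ b t} \<and> C = {} \<and> a \<noteq> b \<and> t \<le> n) \<or>
     (\<exists>l t. h = Holds l (Suc t) \<and> B = {Holds l t} \<and> C = {Holds (compl l) (Suc t)} \<and> t < n)"
  using assms unfolding program_def by simp

theorem mainTheorem6:
  fixes D :: "('f::finite, 'a::finite) law set"
    and Gamma :: "'f lit set"
    and n :: nat
    and s :: "nat \<Rightarrow> 'f lit set"
    and a :: "nat \<Rightarrow> 'a"
  assumes "finite D"
    and "consistent_theory D Gamma"
    and "trajectory D n s a"
    and "s 0 = Gamma"
  shows "\<exists>X. answer_set (program D Gamma n) X \<and>
             (\<forall>t\<le>n. s_at X t = s t) \<and>
             (\<forall>t<n. Occ (a t) t \<in> X)"
proof -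
  have st: "\<And>t. t \<le> n \<Longrightarrow> state D (s t)" using assms(3) unfolding trajectory_def by blast
  have ph: "\<And>t. t < n \<Longrightarrow> s (Suc t) \<in> Phi D (a t) (s t)" using assms(3) unfolding trajectory_def by blast
  have ex: "executable_in D (a t) (s t)" if "t < n" for t
    using ph[OF that] unfolding Phi_def by (auto split: if_splits)
  have cl: "is_least_closed D (Eff D (a t) (s t) \<union> (s t \<inter> s (Suc t))) (s (Suc t))" if "t < n" for t
    using ph[OF that] ex[OF that] unfolding Phi_def by (auto intro: Cl_least)
  define bb where "bb t = (if t < n then a t else (SOME c. executable_in D c (s n)))" for t
  have bbex: "\<And>t c. t \<le> n \<Longrightarrow> executable_in D c (s t) \<Longrightarrow> executable_in D (bb t) (s t)"
  proof -
    fix t c assume "t \<le> n" "executable_in D c (s t)"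
    then show "executable_in D (bb t) (s t)"
      using ex[of t] unfolding bb_def by (cases "t < n") (auto intro: someI)
  qed
  define X where "X = {x. case x of Holds l t \<Rightarrow> t \<le> n \<and> l \<in> s t
      | Possible c t \<Rightarrow> t \<le> n \<and> executable_in D c (s t)
      | Occ c t \<Rightarrow> t \<le> n \<and> executable_in D (bb t) (s t) \<and> c = bb t
      | Nocc c t \<Rightarrow> t \<le> n \<and> executable_in D (bb t) (s t) \<and> c \<noteq> bb t}"
  have XH: "\<And>l t. Holds l t \<in> X \<longleftrightarrow> t \<le> n \<and> l \<in> s t" unfolding X_def by simp
  have XP: "\<And>c t. Possible c t \<in> X \<longleftrightarrow> t \<le> n \<and> executable_in D c (s t)" unfolding X_def by simp
  have XO: "\<And>c t. Occ c t \<in> X \<longleftrightarrow> t \<le> n \<and> executable_in D (bb t) (s t) \<and> c = bb t" unfolding X_def by simp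
  have XN: "\<And>c t. Nocc c t \<in> X \<longleftrightarrow> t \<le> n \<and> executable_in D (bb t) (s t) \<and> c \<noteq> bb t" unfolding X_def by simp
  let ?P = "program D Gamma n"
  let ?R = "reduct ?P X"
  have closed: "closed_rules ?R X"
    unfolding closed_rules_def
  proof (intro allI impI, elim conjE)
    fix h B assume hB: "(Some h, B) \<in> ?R" and BX: "B \<subseteq> X"
    then obtain C where r: "Rule (Some h) B C \<in> ?P" and CX: "C \<inter> X = {}"
      unfolding reduct_def by blast
    from prog_inv[OF r] show "h \<in> X"
    proof (elim disjE exE conjE)
      fix l assume "h = Holds l 0" "B = {}" "C = {}" "l \<in> Gamma"
      then show ?thesis using XH assms(4) by auto
    next
      fix c P t assume r2: "h = Possible c t" "B = (\<lambda>p. Holds p t) ` P" "C = {}" "Executable c P \<in> D" "t \<le> n"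
      then have "P \<subseteq> s t" using BX XH by auto
      then show ?thesis using r2 XP unfolding executable_in_def by auto
    next
      fix c f P t assume r3: "h = Holds f (Suc t)"
         "B = insert (Occ c t) (insert (Possible c t) ((\<lambda>p. Holds p t) ` P))"
         "C = {}" "Causes c f P \<in> D" "t < n"
      then have occ: "c = a t" "P \<subseteq> s t" using BX XH XO bb_def by auto
      then have "f \<in> Eff D (a t) (s t)" using r3 unfolding Eff_def by auto
      then have "f \<in> s (Suc t)" using cl[OF r3(5)] unfolding is_least_closed_def by blast
      then show ?thesis using r3 XH by auto
    next
      fix f P t assume r4: "h = Holds f t" "B = (\<lambda>p. Holds p t) ` P" "C = {}" "Caused P f \<in> D" "t \<le> n"
      then have "P \<subseteq> s t" using BX XH by auto
      then have "f \<in> s t" using r4 st[of t] unfolding state_def closed_DC_def by blast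
      then show ?thesis using r4 XH by auto
    next
      fix c t assume r5: "h = Occ c t" "B = {Possible c t}" "C = {Nocc c t}" "t \<le> n"
      then have e: "executable_in D c (s t)" using BX XP by auto
      have nn: "Nocc c t \<notin> X" using CX r5 by auto
      have e2: "executable_in D (bb t) (s t)" using bbex[OF r5(4) e] .
      then have "c = bb t" using nn XN r5 by auto
      then show ?thesis using XO r5 e2 by auto
    next
      fix c b t assume "h = Nocc c t" "B = {Occ b t}" "C = {}" "c \<noteq> b" "t \<le> n"
      then show ?thesis using BX XO XN by auto
    next
      fix l t assume r7: "h = Holds l (Suc t)" "B = {Holds l t}" "C = {Holds (compl l) (Suc t)}" "t < n"
      then have "l \<in> s t" using BX XH by auto
      have "compl l \<notin> s (Suc t)" using CX r7 XH by auto
      then have "l \<in> s (Suc t)" using interp_compl st[of "Suc t"] r7 unfolding state_def by auto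
      then show ?thesis using r7 XH by auto
    qed
  qed
  have minimal: "X \<subseteq> M" if cM: "closed_rules ?R M" for M
  proof -
    have R2: "Possible c t \<in> M" if "Executable c P \<in> D" "t \<le> n" "(\<lambda>p. Holds p t) ` P \<subseteq> M" for c P t
    proof -
      have "Rule (Some (Possible c t)) ((\<lambda>p. Holds p t) ` P) {} \<in> ?P"
        using that unfolding program_def by (intro UnI1 UnI2) auto
      then show ?thesis by (rule cl_use[OF cM red_mem]) (use that in auto)
    qed
    have R3: "Holds f (Suc t) \<in> M" if "Causes c f P \<in> D" "t < n" "Occ c t \<in> M" "Possible c t \<in> M"
       "(\<lambda>p. Holds p t) ` P \<subseteq> M" for c f P t
    proof -
      have "Rule (Some (Holds f (Suc t))) ({Occ c t, Possible c t} \<union> (\<lambda>p. Holds p t) ` P) {} \<in> ?P"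
        using that unfolding program_def by (intro UnI1 UnI2) auto
      then show ?thesis by (rule cl_use[OF cM red_mem]) (use that in auto)
    qed
    have R4: "Holds f t \<in> M" if "Caused P f \<in> D" "t \<le> n" "(\<lambda>p. Holds p t) ` P \<subseteq> M" for f P t
    proof -
      have "Rule (Some (Holds f t)) ((\<lambda>p. Holds p t) ` P) {} \<in> ?P"
        using that unfolding program_def by (intro UnI1 UnI2) auto
      then show ?thesis by (rule cl_use[OF cM red_mem]) (use that in auto)
    qed
    have R5: "Occ c t \<in> M" if "t \<le> n" "Nocc c t \<notin> X" "Possible c t \<in> M" for c t
    proof -
      have "Rule (Some (Occ c t)) {Possible c t} {Nocc c t} \<in> ?P"
        using that unfolding program_def by (intro UnI1 UnI2) auto
      moreover have "{Nocc c t} \<inter> X = {}" using that by auto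
      ultimately show ?thesis by (rule cl_use[OF cM red_mem]) (use that in auto)
    qed
    have R6: "Nocc c t \<in> M" if "t \<le> n" "c \<noteq> b" "Occ b t \<in> M" for c b t
    proof -
      have "Rule (Some (Nocc c t)) {Occ b t} {} \<in> ?P"
        using that unfolding program_def by (intro UnI1 UnI2) auto
      then show ?thesis by (rule cl_use[OF cM red_mem]) (use that in auto)
    qed
    have R7: "Holds l (Suc t) \<in> M" if "t < n" "Holds (compl l) (Suc t) \<notin> X" "Holds l t \<in> M" for l t
    proof -
      have "Rule (Some (Holds l (Suc t))) {Holds l t} {Holds (compl l) (Suc t)} \<in> ?P"
        using that unfolding program_def by (intro UnI1 UnI2) auto
      moreover have "{Holds (compl l) (Suc t)} \<inter> X = {}" using that by auto
      ultimately show ?thesis by (rule cl_use[OF cM red_mem]) (use that in auto)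
    qed
    have R1: "Holds l 0 \<in> M" if "l \<in> Gamma" for l
    proof -
      have "Rule (Some (Holds l 0)) {} {} \<in> ?P"
        using that unfolding program_def by (intro UnI1 UnI2) auto
      then show ?thesis by (rule cl_use[OF cM red_mem]) (use that in auto)
    qed
    have Poss: "Possible c t \<in> M" if hh: "t \<le> n" "s t \<subseteq> {l. Holds l t \<in> M}" "executable_in D c (s t)" for c t
    proof -
      obtain P where "Executable c P \<in> D" "P \<subseteq> s t" using hh(3) unfolding executable_in_def by blast
      then show ?thesis using R2[of c P t] hh by blast
    qed
    have Oc: "Occ (bb t) t \<in> M" if "t \<le> n" "s t \<subseteq> {l. Holds l t \<in> M}" "executable_in D (bb t) (s t)" for t
      using R5[OF that(1)] Poss[OF that] XN by blast
    have H: "t \<le> n \<longrightarrow> s t \<subseteq> {l. Holds l t \<in> M}" for t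
    proof (induction t)
      case 0
      then show ?case using R1 assms(4) by auto
    next
      case (Suc t)
      show ?case
      proof
        assume tn: "Suc t \<le> n"
        then have t: "t < n" by simp
        have IH: "s t \<subseteq> {l. Holds l t \<in> M}" using Suc t by simp
        define W where "W = s (Suc t) \<inter> {l. Holds l (Suc t) \<in> M}"
        have lc: "is_least_closed D (Eff D (a t) (s t) \<union> (s t \<inter> s (Suc t))) (s (Suc t))" using cl[OF t] .
        have occ: "Occ (a t) t \<in> M" using Oc[of t] IH t ex[OF t] bb_def by auto
        have pos: "Possible (a t) t \<in> M" using Poss[of t] IH t ex[OF t] by auto
        have "closed_DC D W"
        proof -
          have "consistent_lits W" using st[OF tn] unfolding W_def state_def closed_DC_def consistent_lits_def by blast
          moreover have "f \<in> W" if "Caused P f \<in> D" "P \<subseteq> W" for P f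
          proof -
            have "f \<in> s (Suc t)" using that st[OF tn] unfolding W_def state_def closed_DC_def by blast
            moreover have "Holds f (Suc t) \<in> M" using R4[OF that(1) tn] that(2) unfolding W_def by blast
            ultimately show ?thesis unfolding W_def by blast
          qed
          ultimately show ?thesis unfolding closed_DC_def by blast
        qed
        moreover have "Eff D (a t) (s t) \<union> (s t \<inter> s (Suc t)) \<subseteq> W"
        proof
          fix l assume l: "l \<in> Eff D (a t) (s t) \<union> (s t \<inter> s (Suc t))"
          then have ls: "l \<in> s (Suc t)" using lc unfolding is_least_closed_def by blast
          show "l \<in> W"
          proof (cases "l \<in> Eff D (a t) (s t)")
            case True
            then obtain P where "Causes (a t) l P \<in> D" "P \<subseteq> s t" unfolding Eff_def by blast
            then have "Holds l (Suc t) \<in> M" using R3[of "a t" l P t] t occ pos IH by blast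
            then show ?thesis using ls unfolding W_def by blast
          next
            case False
            then have "l \<in> s t" using l by blast
            moreover have "compl l \<notin> s (Suc t)" using interp_cons st[OF tn] ls unfolding state_def by blast
            ultimately have "Holds l (Suc t) \<in> M" using R7[OF t] IH XH by blast
            then show ?thesis using ls unfolding W_def by blast
          qed
        qed
        ultimately have "s (Suc t) \<subseteq> W" using lc unfolding is_least_closed_def by blast
        then show "s (Suc t) \<subseteq> {l. Holds l (Suc t) \<in> M}" unfolding W_def by blast
      qed
    qed
    show "X \<subseteq> M"
    proof
      fix x assume x: "x \<in> X"
      show "x \<in> M"
      proof (cases x)
        case (Holds l t) then show ?thesis using x XH H by blast
      next
        case (Possible c t) then show ?thesis using x XP H Poss by blast
      next
        case (Occ c t)
        then have h: "t \<le> n" "executable_in D (bb t) (s t)" "c = bb t" using x XO by auto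
        have "s t \<subseteq> {l. Holds l t \<in> M}" using H[of t] h(1) by simp
        then show ?thesis using Occ Oc[OF h(1) _ h(2)] h(3) by simp
      next
        case (Nocc c t)
        then have h: "t \<le> n" "executable_in D (bb t) (s t)" "c \<noteq> bb t" using x XN by auto
        have "s t \<subseteq> {l. Holds l t \<in> M}" using H[of t] h(1) by simp
        then show ?thesis using Nocc R6[OF h(1) h(3) Oc[OF h(1) _ h(2)]] by simp
      qed
    qed
  qed
  have constr: "\<forall>B. (None, B) \<in> ?R \<longrightarrow> \<not> B \<subseteq> X"
  proof (intro allI impI)
    fix B assume "(None, B) \<in> ?R"
    then obtain C where "Rule None B C \<in> ?P" unfolding reduct_def by blast
    then obtain f t where B: "B = {Holds (Pos f) t, Holds (Neg f) t}"
      unfolding program_def by blast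
    show "\<not> B \<subseteq> X"
    proof
      assume "B \<subseteq> X"
      then have "t \<le> n" "Pos f \<in> s t" "Neg f \<in> s t" using B XH by auto
      then show False using st[of t] unfolding state_def closed_DC_def consistent_lits_def by blast
    qed
  qed
  have "answer_set ?P X" unfolding answer_set_def using closed minimal constr by blast
  moreover have "\<forall>t\<le>n. s_at X t = s t" unfolding s_at_def using XH by auto
  moreover have "\<forall>t<n. Occ (a t) t \<in> X" using XO ex bb_def by auto
  ultimately show ?thesis by blast
qed

end
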